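(* Let $A\in\mathbb{R}^{n\times n}$ be Metzler and Hurwitz stable, let $b_0\in\mathbb{R}^n_{\ge0}$, let $\mu,\theta,\eta,k_i,k_p>0$, and set $r:=\mu/\theta$, $g_1:=-e_n^TA^{-1}e_1$, $g_n:=-e_n^TA^{-1}e_n$, $g_0:=-e_n^TA^{-1}b_0$. Assume $g_1\neq0$. Consider the closed-loop system $$\dot x=Ax+k_iz_1e_1-k_px_nz_2e_n+b_0,\qquad \dot z_1=\mu-\eta z_1z_2,\qquad \dot z_2=\theta x_n-\eta z_1z_2,$$ with $x\in\mathbb{R}^n$, $z_1,z_2\in\mathbb{R}$. Then the polynomial $$P_1(z):=\eta g_1k_iz^2+(g_0-r)\eta z-g_nk_p\mu r$$ has exactly one positive root $z_1^*$, and the system has exactly one equilibrium $(x^*,z_1^*,z_2^* )$ with $z_1^*>0$; it is given by $x^*_n=r$, $$z_2^*=\frac{\mu}{\eta z_1^*},\qquad x^*=-A^{-1}\Big(k_iz_1^*e_1-\frac{k_p r\mu}{\eta z_1^*}e_n+b_0\Big).$$ Equivalently, $z_1^*=\mu/(\eta z_2^* )$ where $z_2^*$ is the unique positive root of $P_2(z):=-\eta g_nk_prz^2+(g_0-r)\eta z+g_1k_i\mu$.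
   Context: $e_1,\dots,e_n$ is the standard basis of $\mathbb{R}^n$ and $x_n=e_n^Tx$. A real square matrix is Metzler if all its off-diagonal entries are nonnegative, and Hurwitz stable if all its eigenvalues have negative real part. *)

theory Defs
  imports "HOL-Analysis.Analysis"
begin

text \<open>Indices of R^n are a finite well-ordered type; e_1 is the first, e_n the last basis vector.\<close>

definition first_idx :: "'n::{finite,wellorder}" where
  "first_idx = (LEAST i. True)"

definition last_idx :: "'n::{finite,wellorder}" where
  "last_idx = (GREATEST i. True)"

definition metzler :: "real^'n^'n \<Rightarrow> bool" where
  "metzler A \<longleftrightarrow> (\<forall>i j. i \<noteq> j \<longrightarrow> A $ i $ j \<ge> 0)"

definition cmat :: "real^'n^'m \<Rightarrow> complex^'n^'m" where
  "cmat A = (\<chi> i j. complex_of_real (A $ i $ j))"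

definition is_eigenvalue :: "real^'n^'n \<Rightarrow> complex \<Rightarrow> bool" where
  "is_eigenvalue A c \<longleftrightarrow> (\<exists>v. v \<noteq> 0 \<and> cmat A *v v = c *s v)"

definition hurwitz :: "real^'n^'n \<Rightarrow> bool" where
  "hurwitz A \<longleftrightarrow> (\<forall>c. is_eigenvalue A c \<longrightarrow> Re c < 0)"

end

theory Submission
  imports Defs
begin

lemma axis_inner: "axis k (1::real) \<bullet> (y::real^'n) = y $ k"
  by (simp add: cart_eq_inner_axis inner_commute)

lemma mv_nth: "((M::real^'n^'n) *v x) $ i = (\<Sum>j\<in>UNIV. M$i$j * x$j)"
  by (simp add: matrix_vector_mult_def)

lemma MP:
  fixes M :: "real^'n^'n"
  assumes mz: "\<forall>i j. i\<noteq>j \<longrightarrow> M$i$j \<ge> 0" and vp: "\<forall>i. v$i > 0"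
    and mv: "\<forall>i. (M *v v)$i < 0" and mx: "\<forall>i. (M *v x)$i \<le> 0"
  shows "x$k \<ge> 0"
proof (rule ccontr)
  assume neg: "\<not> x$k \<ge> 0"
  define m where "m = Min (range (\<lambda>j. x$j / v$j))"
  obtain i where im: "m = x$i / v$i" proof -
    have "m \<in> range (\<lambda>j. x$j / v$j)" unfolding m_def by (rule Min_in) auto
    then show ?thesis using that by auto
  qed
  have mle: "m \<le> x$j / v$j" for j unfolding m_def by simp
  have "m \<le> x$k / v$k" by (rule mle)
  also have "\<dots> < 0" using neg vp by (simp add: divide_neg_pos)
  finally have m0: "m < 0" .
  have xj: "m * v$j \<le> x$j" for j using mle[of j] vp by (simp add: pos_le_divide_eq)
  have xi: "x$i = m * v$i" using im vp by (metis nonzero_mult_div_cancel_right order_less_irrefl mult.commute divide_eq_eq)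
  have "(\<Sum>j\<in>UNIV. M$i$j * (m * v$j)) \<le> (\<Sum>j\<in>UNIV. M$i$j * x$j)"
  proof (rule sum_mono)
    fix j show "M$i$j * (m * v$j) \<le> M$i$j * x$j"
      using xj[of j] mz xi by (cases "i = j") (auto intro: mult_left_mono)
  qed
  moreover have "(\<Sum>j\<in>UNIV. M$i$j * (m * v$j)) = m * (M *v v)$i"
    by (simp add: mv_nth sum_distrib_left mult_ac)
  moreover have "m * (M *v v)$i > 0" using m0 mv by (simp add: mult_neg_neg)
  ultimately have "(M *v x)$i > 0" by (simp add: mv_nth)
  with mx show False by (meson not_le)
qed

lemma pos_comp:
  fixes M :: "real^'n^'n"
  assumes mz: "\<forall>i j. i\<noteq>j \<longrightarrow> M$i$j \<ge> 0" and x0: "\<forall>j. x$j \<ge> 0"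
    and neg: "(M *v x)$i < 0"
  shows "x$i > 0"
proof (rule ccontr)
  assume "\<not> x$i > 0" then have xi: "x$i = 0" using x0 by (meson less_eq_real_def not_less)
  have "0 \<le> (\<Sum>j\<in>UNIV. M$i$j * x$j)"
  proof (rule sum_nonneg)
    fix j show "0 \<le> M$i$j * x$j" using mz x0 xi by (cases "i = j") auto
  qed
  with neg show False by (simp add: mv_nth)
qed

lemma det_cont:
  fixes F :: "real \<Rightarrow> real^'n^'n"
  assumes "\<And>i j. continuous_on S (\<lambda>t. F t $ i $ j)"
  shows "continuous_on S (\<lambda>t. det (F t))"
  unfolding det_def by (intro continuous_intros assms)


definition Mt :: "real^'n^'n \<Rightarrow> real \<Rightarrow> real^'n^'n" where
  "Mt A t = (\<chi> i j. A$i$j - (if i = j then t else 0))"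

lemma Mt_mv: "(Mt A t *v x) $ i = (A *v x)$i - t * x$i"
proof -
  have "(Mt A t *v x) $ i = (\<Sum>j\<in>UNIV. A$i$j * x$j - (if i = j then t * x$j else 0))"
    unfolding mv_nth by (intro sum.cong) (auto simp: Mt_def algebra_simps)
  also have "\<dots> = (A *v x)$i - t * x$i" by (simp add: sum_subtractf mv_nth)
  finally show ?thesis .
qed

lemma Mt0: "Mt A 0 = A" by (simp add: Mt_def vec_eq_iff)

lemma Mt_metz: "metzler A \<Longrightarrow> \<forall>i j. i\<noteq>j \<longrightarrow> Mt A t$i$j \<ge> 0"
  by (simp add: Mt_def metzler_def)

lemma hurwitz_det:
  assumes h: "hurwitz A" and t: "t \<ge> 0"
  shows "det (Mt A t) \<noteq> 0"
proof
  assume d: "det (Mt A t) = 0"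
  have "\<not> inj ((*v) (Mt A t))"
    using d det_nz_iff_inj_gen[of "(*v) (Mt A t)"] by (simp add: matrix_of_matrix_vector_mul)
  then obtain x where x0: "x \<noteq> 0" and mx: "Mt A t *v x = 0"
  proof -
    obtain a b where "Mt A t *v a = Mt A t *v b" "a \<noteq> b" using \<open>\<not> inj _\<close> unfolding inj_def by blast
    then show ?thesis using that[of "a - b"] by (simp add: matrix_vector_mult_diff_distrib)
  qed
  have ax: "(A *v x)$i = t * x$i" for i using mx Mt_mv[of A t x i] by (simp add: vec_eq_iff)
  define cx where "cx = (\<chi> i. complex_of_real (x$i))"
  have "cx \<noteq> 0" using x0 by (auto simp: cx_def vec_eq_iff)
  moreover have "cmat A *v cx = complex_of_real t *s cx"
  proof -
    have "(cmat A *v cx)$i = complex_of_real ((A *v x)$i)" for i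
      by (simp add: cmat_def cx_def matrix_vector_mult_def)
    then show ?thesis using ax by (simp add: vec_eq_iff cx_def)
  qed
  ultimately have "is_eigenvalue A (complex_of_real t)" unfolding is_eigenvalue_def by blast
  with h t show False unfolding hurwitz_def by fastforce
qed

definition good :: "real^'n^'n \<Rightarrow> real \<Rightarrow> bool" where
  "good A t \<longleftrightarrow> (\<exists>v. (\<forall>i. v$i > 0) \<and> (\<forall>i. (Mt A t *v v)$i < 0))"

lemma good_mono: "good A t \<Longrightarrow> t \<le> t' \<Longrightarrow> good A t'"
proof -
  assume g: "good A t" and tt: "t \<le> t'"
  then obtain v where vp: "\<forall>i. v$i > 0" and mv: "\<forall>i. (Mt A t *v v)$i < 0" using good_def by blast
  have "(Mt A t' *v v)$i < 0" for i
  proof -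
    have "t * v$i \<le> t' * v$i" using tt vp by (simp add: mult_right_mono less_imp_le)
    then show ?thesis using mv[rule_format, of i] by (simp add: Mt_mv)
  qed
  then show ?thesis using vp good_def by blast
qed

lemma good_big: "\<exists>t. t \<ge> 0 \<and> good A t"
proof -
  define t0 where "t0 = 1 + (\<Sum>i\<in>UNIV. \<Sum>j\<in>UNIV. \<bar>A$i$j\<bar>)"
  have "t0 \<ge> 0" unfolding t0_def by (simp add: sum_nonneg add_nonneg_nonneg)
  moreover have "good A t0" unfolding good_def
  proof (intro exI[of _ "\<chi> i. 1"] conjI allI)
    fix i :: 'a
    show "(\<chi> i. (1::real)) $ i > 0" by simp
    have "(A *v (\<chi> i. 1))$i \<le> (\<Sum>j\<in>UNIV. \<bar>A$i$j\<bar>)"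
      by (simp add: mv_nth sum_mono)
    also have "\<dots> \<le> (\<Sum>i\<in>UNIV. \<Sum>j\<in>UNIV. \<bar>A$i$j\<bar>)"
      by (rule member_le_sum) (auto simp: sum_nonneg)
    finally show "(Mt A t0 *v (\<chi> i. 1))$i < 0" by (simp add: Mt_mv t0_def)
  qed
  ultimately show ?thesis by blast
qed

lemma good_open:
  assumes "good A t"
  shows "\<exists>d>0. \<forall>t'. t - d < t' \<longrightarrow> good A t'"
proof -
  obtain v where vp: "\<forall>i. v$i > 0" and mv: "\<forall>i. (Mt A t *v v)$i < 0" using assms good_def by blast
  define d where "d = Min (range (\<lambda>i. - (Mt A t *v v)$i / v$i))"
  have dpos: "d > 0" unfolding d_def using vp mv by (subst Min_gr_iff) (auto intro: divide_neg_pos)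
  have dle: "d \<le> - (Mt A t *v v)$i / v$i" for i unfolding d_def by simp
  have "good A t'" if "t - d < t'" for t'
    unfolding good_def
  proof (intro exI[of _ v] conjI allI)
    fix i show "v$i > 0" using vp by simp
    have "d \<le> (- (Mt A t *v v)$i) / v$i" using dle[of i] by simp
    then have "d * v$i \<le> - (Mt A t *v v)$i" by (rule pos_le_divide_eq[THEN iffD1, OF vp[rule_format]])
    moreover have "(t - t') * v$i < d * v$i" using that vp by (simp add: mult_strict_right_mono)
    ultimately show "(Mt A t' *v v)$i < 0" by (simp add: Mt_mv algebra_simps)
  qed
  with dpos show ?thesis by blast
qed


definition uvec :: "real^'n^'n \<Rightarrow> real \<Rightarrow> real^'n" where
  "uvec A t = (\<chi> k. det (\<chi> i j. if j = k then -1 else Mt A t $ i $ j) / det (Mt A t))"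

lemma uvec_sol: assumes "det (Mt A t) \<noteq> 0" shows "Mt A t *v uvec A t = (\<chi> i. -1)"
proof -
  have e: "Mt A t *v uvec A t = (\<chi> i. -1) \<longleftrightarrow> uvec A t = (\<chi> k. det(\<chi> i j. if j=k then (\<chi> i. (-1::real))$i else Mt A t$i$j)/det(Mt A t))"
    by (rule cramer[OF assms])
  have "uvec A t = (\<chi> k. det(\<chi> i j. if j=k then (\<chi> i. (-1::real))$i else Mt A t$i$j)/det(Mt A t))"
    unfolding uvec_def by (simp only: vec_lambda_beta)
  with e show ?thesis by simp
qed

lemma cont_if_const: "continuous_on S f \<Longrightarrow> continuous_on S g \<Longrightarrow> continuous_on S (\<lambda>x. if P then f x else g x)"
  by (cases P) auto

lemma uvec_cont: "(\<And>t. t \<in> S \<Longrightarrow> det (Mt A t) \<noteq> 0) \<Longrightarrow> continuous_on S (\<lambda>t. uvec A t $ k)"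
  unfolding uvec_def vec_lambda_beta Mt_def
  by (intro continuous_intros det_cont cont_if_const) auto

lemma good0:
  assumes m: "metzler A" and h: "hurwitz A"
  shows "good A 0"
proof -
  define S where "S = {t. t \<ge> 0 \<and> good A t}"
  define T where "T = Inf S"
  have Sne: "S \<noteq> {}" using good_big[of A] S_def by auto
  have bdd: "bdd_below S" unfolding S_def by (rule bdd_belowI[of _ 0]) auto
  have T0: "T \<ge> 0" unfolding T_def using Sne by (rule cInf_greatest) (auto simp: S_def)
  have gt: "good A t" if tT: "t > T" for t
  proof -
    obtain s where "s \<in> S" "s < t" using cInf_less_iff[OF Sne bdd, of t] tT T_def by auto
    then show ?thesis using good_mono[of A s t] S_def by auto
  qed
  have u0: "uvec A T $ k \<ge> 0" for k
  proof -
    have "continuous_on {0..} (\<lambda>t. uvec A t $ k)"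
      by (rule uvec_cont) (use hurwitz_det[OF h] in auto)
    then have "((\<lambda>t. uvec A t $ k) \<longlongrightarrow> uvec A T $ k) (at T within {0..})"
      using T0 by (simp add: continuous_on_def)
    then have lim: "((\<lambda>t. uvec A t $ k) \<longlongrightarrow> uvec A T $ k) (at_right T)"
      by (rule tendsto_within_subset) (use T0 in auto)
    have ev: "eventually (\<lambda>t. 0 \<le> uvec A t $ k) (at_right T)"
    proof -
      have "eventually (\<lambda>t. T < t) (at_right T)" by (rule eventually_at_right_less)
      then show ?thesis
      proof (rule eventually_mono)
        fix t assume tT: "T < t"
        obtain v where vp: "\<forall>i. v$i > 0" and mv: "\<forall>i. (Mt A t *v v)$i < 0"
          using gt[OF tT] good_def by blast
        have d: "det (Mt A t) \<noteq> 0" using hurwitz_det[OF h] T0 tT by simp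
        show "0 \<le> uvec A t $ k"
          by (rule MP[OF Mt_metz[OF m] vp mv]) (simp add: uvec_sol[OF d])
      qed
    qed
    show ?thesis by (rule tendsto_lowerbound[OF lim ev]) simp
  qed
  have dT: "det (Mt A T) \<noteq> 0" using hurwitz_det[OF h T0] .
  have up: "uvec A T $ k > 0" for k
    by (rule pos_comp[OF Mt_metz[OF m], of _ T]) (use u0 uvec_sol[OF dT] in auto)
  have gT: "good A T" unfolding good_def
    by (rule exI[of _ "uvec A T"]) (use up uvec_sol[OF dT] in auto)
  obtain d where dp: "d > 0" and dg: "\<forall>t'. T - d < t' \<longrightarrow> good A t'" using good_open[OF gT] by blast
  have "T = 0"
  proof (rule ccontr)
    assume "T \<noteq> 0" with T0 have Tp: "T > 0" by simp
    define t' where "t' = max 0 (T - d/2)"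
    have "t' \<in> S" unfolding S_def using dg dp by (auto simp: t'_def)
    then have "T \<le> t'" unfolding T_def using bdd by (rule cInf_lower)
    moreover have "t' < T" using Tp dp by (simp add: t'_def)
    ultimately show False by simp
  qed
  with gT show ?thesis by simp
qed

lemma nonneg_sol:
  assumes m: "metzler A" and h: "hurwitz A" and ax: "\<forall>i. (A *v x)$i \<le> 0"
  shows "x$k \<ge> 0"
proof -
  obtain v where vp: "\<forall>i. v$i > 0" and mv: "\<forall>i. (Mt A 0 *v v)$i < 0" using good0[OF m h] good_def by blast
  show ?thesis using MP[OF Mt_metz[OF m] vp mv, of x] ax by (simp add: Mt0)
qed


lemma mv_neg: "(M::real^'n^'n) *v (- x) = - (M *v x)"
  by (simp add: vec_eq_iff mv_nth sum_negf)

lemma quad_unique: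
  fixes a b c :: real
  assumes a: "a > 0" and c: "c < 0"
  shows "\<exists>!z. z > 0 \<and> a*z^2 + b*z + c = 0"
proof
  define D where "D = b^2 - 4*a*c"
  have D: "D > b^2" using a c by (simp add: D_def mult_pos_neg)
  have sD: "sqrt D > \<bar>b\<bar>" using D by (metis real_sqrt_abs real_sqrt_less_mono)
  define z where "z = (-b + sqrt D) / (2*a)"
  have "z > 0" using sD a by (simp add: z_def)
  moreover have "a*z^2 + b*z + c = 0"
  proof -
    have "D \<ge> 0" using D by (metis le_less_trans zero_le_power2 less_imp_le)
    then have "(sqrt D)^2 = D" by simp
    then show ?thesis using a by (simp add: z_def D_def field_simps power2_eq_square)
  qed
  ultimately show "z > 0 \<and> a*z^2 + b*z + c = 0" by simp
next
  fix w assume w: "w > 0 \<and> a*w^2 + b*w + c = 0"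
  show "w = (-b + sqrt (b^2 - 4*a*c)) / (2*a)"
  proof -
    define D where "D = b^2 - 4*a*c"
    have h: "a*w^2 + b*w = -c" using w by simp
    have "(2*a*w + b)^2 = 4*a*(a*w^2+b*w) + b^2" by (simp add: power2_eq_square algebra_simps)
    also have "\<dots> = D" using h by (simp add: D_def)
    finally have "(2*a*w + b)^2 = D" .
    moreover have "2*a*w + b > 0"
    proof -
      have "w * (a*w + b) = -c" using w by (simp add: algebra_simps power2_eq_square)
      then have "0 < w * (a*w + b)" using c by simp
      then have "a*w + b > 0" using w zero_less_mult_pos by blast
      moreover have "a*w > 0" using a w by simp
      ultimately show ?thesis by linarith
    qed
    ultimately have "sqrt D = 2*a*w + b" by (metis less_imp_le real_sqrt_unique)
    then show ?thesis using a by (simp add: D_def field_simps)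
  qed
qed


lemma P1_factor:
  fixes \<eta> z g1 ki g0 r gn kp \<mu> :: real
  assumes "\<eta> > 0" "z > 0"
  shows "\<eta>*g1*ki*z^2 + (g0 - r)*\<eta>*z - gn*kp*\<mu>*r = \<eta>*z*(ki*z*g1 - (kp*r*\<mu>/(\<eta>*z))*gn + g0 - r)"
proof -
  have "\<eta>*z*((kp*r*\<mu>/(\<eta>*z))*gn) = gn*kp*\<mu>*r" using assms by simp
  then show ?thesis by (simp add: algebra_simps power2_eq_square)
qed

theorem mainTheorem1:
  fixes A :: "real^('n::{finite,wellorder})^('n::{finite,wellorder})"
    and b0 :: "real^('n::{finite,wellorder})"
    and \<mu> \<theta> \<eta> ki kp r g1 gn g0 :: real
    and P1 P2 :: "real \<Rightarrow> real"
    and equil :: "real^('n::{finite,wellorder}) \<Rightarrow> real \<Rightarrow> real \<Rightarrow> bool"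
  assumes "metzler A" and "hurwitz A"
    and "\<forall>i. b0 $ i \<ge> 0"
    and "\<mu> > 0" "\<theta> > 0" "\<eta> > 0" "ki > 0" "kp > 0"
    and "r = \<mu> / \<theta>"
    and "g1 = - (axis last_idx 1 \<bullet> (matrix_inv A *v axis first_idx 1))"
    and "gn = - (axis last_idx 1 \<bullet> (matrix_inv A *v axis last_idx 1))"
    and "g0 = - (axis last_idx 1 \<bullet> (matrix_inv A *v b0))"
    and "g1 \<noteq> 0"
    and "\<And>z. P1 z = \<eta> * g1 * ki * z^2 + (g0 - r) * \<eta> * z - gn * kp * \<mu> * r"
    and "\<And>z. P2 z = - \<eta> * gn * kp * r * z^2 + (g0 - r) * \<eta> * z + g1 * ki * \<mu>"
    and "\<And>x z1 z2. equil x z1 z2 \<longleftrightarrow>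
           (A *v x + (ki * z1) *\<^sub>R axis first_idx 1 - (kp * x $ last_idx * z2) *\<^sub>R axis last_idx 1 + b0 = 0
            \<and> \<mu> - \<eta> * z1 * z2 = 0
            \<and> \<theta> * x $ last_idx - \<eta> * z1 * z2 = 0)"
  shows "(\<exists>!z. z > 0 \<and> P1 z = 0)
    \<and> (\<exists>!p. case p of (x, z1, z2) \<Rightarrow> equil x z1 z2 \<and> z1 > 0)
    \<and> (\<forall>x z1 z2. equil x z1 z2 \<and> z1 > 0 \<longrightarrow>
          P1 z1 = 0 \<and> x $ last_idx = r \<and> z2 = \<mu> / (\<eta> * z1)
          \<and> x = - (matrix_inv A *v ((ki * z1) *\<^sub>R axis first_idx 1
                   - (kp * r * \<mu> / (\<eta> * z1)) *\<^sub>R axis last_idx 1 + b0)))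
    \<and> (\<exists>!z. z > 0 \<and> P2 z = 0)
    \<and> (\<forall>x z1 z2. equil x z1 z2 \<and> z1 > 0 \<longrightarrow>
          z2 > 0 \<and> P2 z2 = 0 \<and> z1 = \<mu> / (\<eta> * z2))"
proof -
  note m = assms(1) and h = assms(2) and b0p = assms(3)
  note pos = assms(4-8) and rdef = assms(9) and g1d = assms(10) and gnd = assms(11) and g0d = assms(12)
  note g1nz = assms(13) and P1d = assms(14) and P2d = assms(15) and eqd = assms(16)
  define e1 :: "real^('n::{finite,wellorder})" where "e1 = axis first_idx 1"
  define en :: "real^('n::{finite,wellorder})" where "en = axis last_idx 1"
  define Ai where "Ai = matrix_inv A"
  have dA: "det A \<noteq> 0" using hurwitz_det[OF h, of 0] by (simp add: Mt0)
  have invA: "invertible A" using dA invertible_det_nz by blast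
  have Ai: "A ** Ai = mat 1 \<and> Ai ** A = mat 1"
    using invA unfolding Ai_def matrix_inv_def invertible_def by (rule someI_ex)
  have AAi: "A *v (Ai *v y) = y" for y by (metis Ai matrix_vector_mul_assoc matrix_vector_mul_lid)
  have AiA: "Ai *v (A *v y) = y" for y by (metis Ai matrix_vector_mul_assoc matrix_vector_mul_lid)
  have nonneg: "(- (Ai *v y))$k \<ge> 0" if "\<forall>i. y$i \<ge> 0" for y k
    by (rule nonneg_sol[OF m h]) (simp add: mv_neg AAi that)
  have g1c: "g1 = (- (Ai *v e1))$last_idx" by (simp add: g1d Ai_def e1_def axis_inner)
  have gnc: "gn = (- (Ai *v en))$last_idx" by (simp add: gnd Ai_def en_def axis_inner)
  have g0c: "g0 = (- (Ai *v b0))$last_idx" by (simp add: g0d Ai_def axis_inner)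
  have g1p: "g1 > 0"
  proof -
    have "g1 \<ge> 0" unfolding g1c by (rule nonneg) (simp add: e1_def axis_def)
    with g1nz show ?thesis by simp
  qed
  have gnp: "gn > 0"
  proof -
    have mz: "\<forall>i j. i\<noteq>j \<longrightarrow> A$i$j \<ge> 0" using m metzler_def by blast
    have x0: "\<forall>j. (- (Ai *v en))$j \<ge> 0" by (intro allI nonneg) (simp add: en_def axis_def)
    have "(- (Ai *v en))$last_idx > 0"
      by (rule pos_comp[OF mz x0]) (simp add: en_def axis_def mv_neg AAi)
    then show ?thesis using gnc by simp
  qed
  define W where "W = (\<lambda>z1. (ki * z1) *\<^sub>R e1 - (kp * r * \<mu> / (\<eta> * z1)) *\<^sub>R en + b0)"
  have xform: "(- (Ai *v W z1))$last_idx = ki*z1*g1 - (kp * r * \<mu> / (\<eta> * z1))*gn + g0" for z1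
    by (simp add: W_def g1c gnc g0c matrix_vector_right_distrib matrix_vector_mult_diff_distrib
         matrix_vector_mult_scaleR algebra_simps)
  define a where "a = \<eta> * g1 * ki"
  define b where "b = (g0 - r) * \<eta>"
  define c where "c = - (gn * kp * \<mu> * r)"
  have rp: "r > 0" using pos rdef by simp
  have ap: "a > 0" using pos g1p by (simp add: a_def)
  have cn: "c < 0" using pos gnp rp by (simp add: c_def)
  have P1abc: "P1 z = a*z^2 + b*z + c" for z by (simp add: P1d a_def b_def c_def)
  have P1u: "\<exists>!z. z > 0 \<and> P1 z = 0" unfolding P1abc by (rule quad_unique[OF ap cn])
  then obtain z1s where z1s: "z1s > 0" "P1 z1s = 0" by blast
  have z1u: "z = z1s" if "z > 0" "P1 z = 0" for z using P1u z1s that by blast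
  have char: "P1 z1 = 0 \<and> x $ last_idx = r \<and> z2 = \<mu> / (\<eta> * z1) \<and> x = - (Ai *v W z1)"
    if eq: "equil x z1 z2" and z1p: "z1 > 0" for x z1 z2
  proof -
    have E1: "A *v x + (ki * z1) *\<^sub>R e1 - (kp * x $ last_idx * z2) *\<^sub>R en + b0 = 0"
      and E2: "\<mu> - \<eta> * z1 * z2 = 0" and E3: "\<theta> * x $ last_idx - \<eta> * z1 * z2 = 0"
      using eq eqd e1_def en_def by auto
    have z2: "z2 = \<mu> / (\<eta> * z1)" using E2 pos z1p by (simp add: field_simps)
    have "\<theta> * x $ last_idx = \<theta> * r" using E2 E3 pos rdef by simp
    then have xn: "x $ last_idx = r" using pos by simp
    have q: "kp * x $ last_idx * z2 = kp * r * \<mu> / (\<eta> * z1)" using xn z2 by simp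
    have "A *v x + W z1 = 0" using E1 unfolding W_def q by (simp add: algebra_simps)
    then have "A *v x = - W z1" by (simp add: eq_neg_iff_add_eq_0)
    then have xe: "x = - (Ai *v W z1)" using AiA[of x] by (simp add: mv_neg)
    have "r = ki*z1*g1 - (kp * r * \<mu> / (\<eta> * z1))*gn + g0" using xform[of z1] xe xn by simp
    then have "P1 z1 = 0" using P1_factor[of \<eta> z1 g1 ki g0 r gn kp \<mu>] pos z1p by (simp add: P1d)
    with xn z2 xe show ?thesis by simp
  qed
  define z2s where "z2s = \<mu> / (\<eta> * z1s)"
  define xs where "xs = - (Ai *v W z1s)"
  have z2sp: "z2s > 0" using pos z1s by (simp add: z2s_def)
  have eqs: "equil xs z1s z2s"
  proof -
    have "\<eta>*z1s*(ki*z1s*g1 - (kp*r*\<mu>/(\<eta>*z1s))*gn + g0 - r) = 0"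
      using z1s P1_factor[of \<eta> z1s g1 ki g0 r gn kp \<mu>] pos by (simp add: P1d)
    then have "ki*z1s*g1 - (kp * r * \<mu> / (\<eta> * z1s))*gn + g0 = r"
      using pos z1s(1) by simp
    then have xn: "xs $ last_idx = r" using xform[of z1s] by (simp add: xs_def)
    have q: "kp * xs $ last_idx * z2s = kp * r * \<mu> / (\<eta> * z1s)" using xn by (simp add: z2s_def)
    have "A *v xs = - W z1s" by (simp add: xs_def mv_neg AAi)
    then have E1: "A *v xs + (ki * z1s) *\<^sub>R e1 - (kp * xs $ last_idx * z2s) *\<^sub>R en + b0 = 0"
      unfolding q by (simp add: W_def algebra_simps)
    have E2: "\<mu> - \<eta> * z1s * z2s = 0" using pos z1s by (simp add: z2s_def)
    have E3: "\<theta> * xs $ last_idx - \<eta> * z1s * z2s = 0" using E2 xn rdef pos by simp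
    show ?thesis using E1 E2 E3 eqd e1_def en_def by auto
  qed
  have part2: "\<exists>!p. case p of (x, z1, z2) \<Rightarrow> equil x z1 z2 \<and> z1 > 0"
  proof (rule ex1I[of _ "(xs, z1s, z2s)"])
    show "case (xs, z1s, z2s) of (x, z1, z2) \<Rightarrow> equil x z1 z2 \<and> z1 > 0" using eqs z1s by simp
  next
    fix p assume "case p of (x, z1, z2) \<Rightarrow> equil x z1 z2 \<and> z1 > 0"
    then obtain x z1 z2 where p: "p = (x, z1, z2)" "equil x z1 z2" "z1 > 0" by (cases p) auto
    then have c: "P1 z1 = 0 \<and> x $ last_idx = r \<and> z2 = \<mu> / (\<eta> * z1) \<and> x = - (Ai *v W z1)"
      using char by blast
    then have "z1 = z1s" using z1u p by blast
    then show "p = (xs, z1s, z2s)" using p c by (simp add: xs_def z2s_def)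
  qed
  have P2rel: "P2 z = (\<eta> * z^2 / \<mu>) * P1 (\<mu> / (\<eta> * z))" if "z > 0" for z
    using pos that by (simp add: P1d P2d field_simps power2_eq_square)
  have P2u: "\<exists>!z. z > 0 \<and> P2 z = 0"
  proof (rule ex1I[of _ z2s])
    show "z2s > 0 \<and> P2 z2s = 0" using z2sp P2rel[OF z2sp] z1s pos
      by (simp add: z2s_def field_simps)
  next
    fix z assume zz: "z > 0 \<and> P2 z = 0"
    then have "P1 (\<mu> / (\<eta> * z)) = 0" using P2rel[of z] pos by simp
    then have "\<mu> / (\<eta> * z) = z1s" using z1u zz pos by simp
    then show "z = z2s" using pos zz z1s by (simp add: z2s_def field_simps)
  qed
  have part5: "z2 > 0 \<and> P2 z2 = 0 \<and> z1 = \<mu> / (\<eta> * z2)" if "equil x z1 z2" "z1 > 0" for x z1 z2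
  proof -
    have c: "P1 z1 = 0" "z2 = \<mu> / (\<eta> * z1)" using char[OF that] by auto
    have z2p: "z2 > 0" using c pos that by simp
    have "\<eta> * (z1 * z2) = \<mu>" using c pos that by simp
    then have zz: "z1 * (\<eta> * z2) = \<mu>" using mult.left_commute[of z1 \<eta> z2] by simp
    have nz: "\<eta> * z2 \<noteq> 0" using z2p pos by simp
    have z1e: "z1 = \<mu> / (\<eta> * z2)" using nonzero_mult_div_cancel_right[OF nz, of z1] zz by simp
    have "P2 z2 = 0" using P2rel[OF z2p] z1e[symmetric] c(1) by simp
    with z2p z1e show ?thesis by simp
  qed
  have part3: "\<forall>x z1 z2. equil x z1 z2 \<and> z1 > 0 \<longrightarrow>
          P1 z1 = 0 \<and> x $ last_idx = r \<and> z2 = \<mu> / (\<eta> * z1)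
          \<and> x = - (matrix_inv A *v ((ki * z1) *\<^sub>R axis first_idx 1
                   - (kp * r * \<mu> / (\<eta> * z1)) *\<^sub>R axis last_idx 1 + b0))"
  proof (intro allI impI)
    fix x z1 z2 assume a: "equil x z1 z2 \<and> z1 > 0"
    have "P1 z1 = 0 \<and> x $ last_idx = r \<and> z2 = \<mu> / (\<eta> * z1) \<and> x = - (Ai *v W z1)"
      using char a by blast
    then show "P1 z1 = 0 \<and> x $ last_idx = r \<and> z2 = \<mu> / (\<eta> * z1)
          \<and> x = - (matrix_inv A *v ((ki * z1) *\<^sub>R axis first_idx 1
                   - (kp * r * \<mu> / (\<eta> * z1)) *\<^sub>R axis last_idx 1 + b0))"
      unfolding Ai_def W_def e1_def en_def .
  qed
  have part5': "\<forall>x z1 z2. equil x z1 z2 \<and> z1 > 0 \<longrightarrow> z2 > 0 \<and> P2 z2 = 0 \<and> z1 = \<mu> / (\<eta> * z2)"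
    using part5 by blast
  show ?thesis using P1u part2 P2u part5' part3 by (intro conjI)
qed

end
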